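(* Let $(P,\lambda)$ be a marked poset which is strict and irredundant, with $\lambda(P^* )\subseteq\mathbb{Z}$. Let $\mathcal{L}(P)$ be the set of linear extensions $\pi=(y_1,\dots,y_N)$ of $P$ in which the marked elements appear in increasing order of their markings. Then for every integer $n\ge 0$ the number of lattice points of the dilate $n\,\mathcal{O}(P,\lambda)$ is $$\mathrm{Ehr}_{\mathcal{O}(P,\lambda)}(n)=\sum_{\pi\in\mathcal{L}(P)}\ \prod_{(a,b)}\binom{n(\lambda(b)-\lambda(a))-d+k}{k},$$ where the product runs over all pairs $(a,b)$ of marked elements that are consecutive among the marked elements in $\pi$ (so that the entries of $\pi$ strictly between $a$ and $b$ form a block of unmarked elements), $k$ is the number of elements strictly between $a$ and $b$ in $\pi$, and $d$ is the number of descents of $\pi$ occurring between $a$ and $b$.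
   Context: A marked poset $(P,\lambda)$ is a finite poset $(P,\preceq)$ together with an induced subposet $P^*\subseteq P$ of marked elements and an order-preserving marking $\lambda:P^*\to\mathbb{R}$, with $\min(P)\cup\max(P)\subseteq P^*$. It is strict if $\lambda(a)<\lambda(b)$ whenever $a\prec b$ in $P^*$, and irredundant (regular) if for every covering relation $p\prec q$ in $P$ and all $a,b\in P^*$ with $a\preceq q$ and $p\preceq b$, one has $a=b$ or $\lambda(a)<\lambda(b)$. The marked order polytope $\mathcal{O}(P,\lambda)\subseteq\mathbb{R}^{P\setminus P^*}$ is the set of all $x$ such that, setting $x_a=\lambda(a)$ for $a\in P^*$, $x_p\le x_q$ for all $p\preceq q$; its lattice points in the dilate $n\mathcal{O}(P,\lambda)$ are counted in $\mathbb{Z}^{P\setminus P^*}$. A linear extension of $P$ (with $|P|=N$) is an order-preserving bijection $P\to[N]$, identified with the sequence $(y_1,\dots,y_N)$ of elements in order. Descents are taken with respect to a fixed natural labeling $\omega:P\to[N]$ (an order-preserving bijection): $\pi=(y_1,\dots,y_N)$ has a descent at position $j$ if $\omega(y_j)>\omega(y_{j+1})$; a descent between $a$ and $b$ is one at a position $j$ with $y_j,y_{j+1}$ among the entries from $a$ to $b$ inclusive. *)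

theory Defs
  imports Complex_Main
begin

definition finite_poset :: "'a set \<Rightarrow> ('a \<Rightarrow> 'a \<Rightarrow> bool) \<Rightarrow> bool" where
  "finite_poset P le \<longleftrightarrow> finite P \<and>
     (\<forall>p q. le p q \<longrightarrow> p \<in> P \<and> q \<in> P) \<and>
     (\<forall>p\<in>P. le p p) \<and>
     (\<forall>p q. le p q \<and> le q p \<longrightarrow> p = q) \<and>
     (\<forall>p q s. le p q \<and> le q s \<longrightarrow> le p s)"

definition poset_min :: "'a set \<Rightarrow> ('a \<Rightarrow> 'a \<Rightarrow> bool) \<Rightarrow> 'a set" where
  "poset_min P le = {p \<in> P. \<forall>q\<in>P. le q p \<longrightarrow> q = p}"

definition poset_max :: "'a set \<Rightarrow> ('a \<Rightarrow> 'a \<Rightarrow> bool) \<Rightarrow> 'a set" where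
  "poset_max P le = {p \<in> P. \<forall>q\<in>P. le p q \<longrightarrow> q = p}"

definition marked_poset :: "'a set \<Rightarrow> ('a \<Rightarrow> 'a \<Rightarrow> bool) \<Rightarrow> 'a set \<Rightarrow> ('a \<Rightarrow> real) \<Rightarrow> bool" where
  "marked_poset P le M lam \<longleftrightarrow> finite_poset P le \<and> M \<subseteq> P \<and>
     (\<forall>a\<in>M. \<forall>b\<in>M. le a b \<longrightarrow> lam a \<le> lam b) \<and>
     poset_min P le \<union> poset_max P le \<subseteq> M"

definition strict_marking :: "('a \<Rightarrow> 'a \<Rightarrow> bool) \<Rightarrow> 'a set \<Rightarrow> ('a \<Rightarrow> real) \<Rightarrow> bool" where
  "strict_marking le M lam \<longleftrightarrow> (\<forall>a\<in>M. \<forall>b\<in>M. le a b \<and> a \<noteq> b \<longrightarrow> lam a < lam b)"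

definition covers :: "('a \<Rightarrow> 'a \<Rightarrow> bool) \<Rightarrow> 'a \<Rightarrow> 'a \<Rightarrow> bool" where
  "covers le p q \<longleftrightarrow> le p q \<and> p \<noteq> q \<and> \<not> (\<exists>s. le p s \<and> le s q \<and> s \<noteq> p \<and> s \<noteq> q)"

definition irredundant :: "('a \<Rightarrow> 'a \<Rightarrow> bool) \<Rightarrow> 'a set \<Rightarrow> ('a \<Rightarrow> real) \<Rightarrow> bool" where
  "irredundant le M lam \<longleftrightarrow>
     (\<forall>p q. covers le p q \<longrightarrow>
        (\<forall>a\<in>M. \<forall>b\<in>M. le a q \<and> le p b \<longrightarrow> a = b \<or> lam a < lam b))"

text \<open>The marked order polytope, as a subset of R^(P - M); points are functions 'a => real
  vanishing outside P - M.\<close>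
definition marked_order_polytope ::
  "'a set \<Rightarrow> ('a \<Rightarrow> 'a \<Rightarrow> bool) \<Rightarrow> 'a set \<Rightarrow> ('a \<Rightarrow> real) \<Rightarrow> ('a \<Rightarrow> real) set" where
  "marked_order_polytope P le M lam =
     {x. (\<forall>p. p \<notin> P - M \<longrightarrow> x p = 0) \<and>
         (\<forall>p q. le p q \<longrightarrow>
            (if p \<in> M then lam p else x p) \<le> (if q \<in> M then lam q else x q))}"

definition ehrhart_count :: "('a \<Rightarrow> real) set \<Rightarrow> nat \<Rightarrow> nat" where
  "ehrhart_count Q n = card {z \<in> (\<lambda>x p. real n * x p) ` Q. \<forall>p. z p \<in> \<int>}"

definition linear_extension :: "'a set \<Rightarrow> ('a \<Rightarrow> 'a \<Rightarrow> bool) \<Rightarrow> 'a list \<Rightarrow> bool" where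
  "linear_extension P le ys \<longleftrightarrow> distinct ys \<and> set ys = P \<and>
     (\<forall>i<length ys. \<forall>j<length ys. le (ys ! i) (ys ! j) \<longrightarrow> i \<le> j)"

definition natural_labeling :: "'a set \<Rightarrow> ('a \<Rightarrow> 'a \<Rightarrow> bool) \<Rightarrow> ('a \<Rightarrow> nat) \<Rightarrow> bool" where
  "natural_labeling P le \<omega> \<longleftrightarrow> bij_betw \<omega> P {1..card P} \<and> (\<forall>p q. le p q \<longrightarrow> \<omega> p \<le> \<omega> q)"

text \<open>L(P): linear extensions in which the marked elements appear in increasing order of
  their markings (ties among equally marked elements broken by the natural labeling).\<close>
definition marked_linexts ::
  "'a set \<Rightarrow> ('a \<Rightarrow> 'a \<Rightarrow> bool) \<Rightarrow> 'a set \<Rightarrow> ('a \<Rightarrow> real) \<Rightarrow> ('a \<Rightarrow> nat) \<Rightarrow> 'a list set" where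
  "marked_linexts P le M lam \<omega> =
     {ys. linear_extension P le ys \<and>
        (\<forall>i j. i < j \<and> j < length ys \<and> ys ! i \<in> M \<and> ys ! j \<in> M \<longrightarrow>
           lam (ys ! i) < lam (ys ! j) \<or>
           (lam (ys ! i) = lam (ys ! j) \<and> \<omega> (ys ! i) < \<omega> (ys ! j)))}"

definition consecutive_marked :: "'a set \<Rightarrow> 'a list \<Rightarrow> (nat \<times> nat) set" where
  "consecutive_marked M ys =
     {(i, j). i < j \<and> j < length ys \<and> ys ! i \<in> M \<and> ys ! j \<in> M \<and>
              (\<forall>t. i < t \<and> t < j \<longrightarrow> ys ! t \<notin> M)}"

definition descents_between :: "('a \<Rightarrow> nat) \<Rightarrow> 'a list \<Rightarrow> nat \<Rightarrow> nat \<Rightarrow> nat" where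
  "descents_between \<omega> ys i j = card {t. i \<le> t \<and> t < j \<and> \<omega> (ys ! t) > \<omega> (ys ! Suc t)}"

end

theory Submission
  imports Defs "HOL-Library.Product_Lexorder" "HOL-Library.FuncSet" "HOL-Computational_Algebra.Polynomial"
begin


definition chains :: "int \<Rightarrow> int \<Rightarrow> nat \<Rightarrow> (nat \<Rightarrow> bool) \<Rightarrow> (nat \<Rightarrow> int) set" where
  "chains lo hi k D = {u. u 0 = lo \<and> u (Suc k) = hi \<and> (\<forall>t > Suc k. u t = 0) \<and>
     (\<forall>t\<le>k. u t \<le> u (Suc t) \<and> (D t \<longrightarrow> u t < u (Suc t)))}"

definition ccons :: "int \<Rightarrow> (nat \<Rightarrow> int) \<Rightarrow> nat \<Rightarrow> int" where
  "ccons lo u = (\<lambda>t. if t = 0 then lo else u (t - 1))"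

lemma hockey_int:
  "(\<Sum>x\<in>{B - int r..B}. (nat (B - x) + k) choose k) = (r + Suc k) choose (Suc k)"
proof (induction r)
  case 0
  then show ?case by simp
next
  case (Suc r)
  have e: "{B - int (Suc r)..B} = insert (B - int (Suc r)) {B - int r..B}" by auto
  have n: "nat (B - (B - int (Suc r))) = Suc r" by simp
  have "(\<Sum>x\<in>{B - int (Suc r)..B}. (nat (B - x) + k) choose k)
      = ((Suc r + k) choose k) + ((r + Suc k) choose (Suc k))"
    by (subst e, subst sum.insert) (auto simp only: Suc.IH n finite_atLeastAtMost, simp)
  also have "\<dots> = ((r + Suc k) choose k) + ((r + Suc k) choose (Suc k))" by simp
  also have "\<dots> = (Suc r + Suc k) choose (Suc k)"
    by (simp only: add_Suc binomial_Suc_Suc)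
  finally show ?case .
qed

lemma hockey_gen:
  fixes a b :: int and d :: nat
  shows "(\<Sum>x\<in>{a..b}. if int d \<le> b - x then (nat (b - x - int d) + k) choose k else 0)
       = (if int d \<le> b - a then (nat (b - a - int d) + Suc k) choose (Suc k) else 0)"
proof -
  have "(\<Sum>x\<in>{a..b}. if int d \<le> b - x then (nat (b - x - int d) + k) choose k else 0)
     = (\<Sum>x\<in>{x\<in>{a..b}. int d \<le> b - x}. (nat (b - x - int d) + k) choose k)"
    by (rule sum.inter_filter[symmetric]) simp
  also have "{x\<in>{a..b}. int d \<le> b - x} = {a..b - int d}" by auto
  also have "(\<Sum>x\<in>{a..b - int d}. (nat (b - x - int d) + k) choose k)
      = (if int d \<le> b - a then (nat (b - a - int d) + Suc k) choose (Suc k) else 0)"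
  proof (cases "int d \<le> b - a")
    case True
    define r where "r = nat (b - a - int d)"
    have "a = (b - int d) - int r" using True r_def by simp
    then have "(\<Sum>x\<in>{a..b - int d}. (nat (b - x - int d) + k) choose k)
        = (\<Sum>x\<in>{(b - int d) - int r..b - int d}. (nat ((b - int d) - x) + k) choose k)"
      by (intro sum.cong) (auto simp: algebra_simps)
    also have "\<dots> = (r + Suc k) choose (Suc k)" by (rule hockey_int)
    finally show ?thesis using True r_def by simp
  next
    case False
    then show ?thesis by simp
  qed
  finally show ?thesis .
qed

lemma chains_Suc:
  "chains lo hi (Suc k) D =
     (\<Union>x\<in>{lo + (if D 0 then 1 else 0)..hi}. ccons lo ` chains x hi k (\<lambda>t. D (Suc t)))"
proof (intro equalityI subsetI)
  fix u assume u: "u \<in> chains lo hi (Suc k) D"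
  define u' where "u' = (\<lambda>t. u (Suc t))"
  have eq: "u = ccons lo u'" using u unfolding u'_def ccons_def chains_def by (auto simp: fun_eq_iff)
  have mono: "\<And>t. t \<le> Suc k \<Longrightarrow> u 1 \<le> u (Suc t)"
  proof -
    fix t assume "t \<le> Suc k"
    then show "u 1 \<le> u (Suc t)"
    proof (induction t)
      case 0 then show ?case by simp
    next
      case (Suc t)
      then have "u (Suc t) \<le> u (Suc (Suc t))" using u unfolding chains_def by auto
      with Suc show ?case by simp
    qed
  qed
  have "u 1 \<le> hi" using mono[of "Suc k"] u unfolding chains_def by simp
  moreover have "lo + (if D 0 then 1 else 0) \<le> u 1" using u unfolding chains_def
    by (auto dest!: spec[of _ 0])
  moreover have "u' \<in> chains (u 1) hi k (\<lambda>t. D (Suc t))"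
    using u unfolding chains_def u'_def by auto
  ultimately show "u \<in> (\<Union>x\<in>{lo + (if D 0 then 1 else 0)..hi}. ccons lo ` chains x hi k (\<lambda>t. D (Suc t)))"
    using eq by auto
next
  fix u assume "u \<in> (\<Union>x\<in>{lo + (if D 0 then 1 else 0)..hi}. ccons lo ` chains x hi k (\<lambda>t. D (Suc t)))"
  then obtain x u' where x: "lo + (if D 0 then 1 else 0) \<le> x" and u': "u' \<in> chains x hi k (\<lambda>t. D (Suc t))"
    and u: "u = ccons lo u'" by auto
  show "u \<in> chains lo hi (Suc k) D"
    unfolding chains_def mem_Collect_eq
  proof (intro conjI allI impI)
    show "u 0 = lo" using u by (simp add: ccons_def)
    show "u (Suc (Suc k)) = hi" using u u' by (simp add: ccons_def chains_def)
    show "u t = 0" if "Suc (Suc k) < t" for t using u u' that by (simp add: ccons_def chains_def)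
    show "u t \<le> u (Suc t)" if "t \<le> Suc k" for t
      using u u' that x by (cases t) (auto simp: ccons_def chains_def split: if_splits)
    show "u t < u (Suc t)" if "t \<le> Suc k" "D t" for t
      using u u' that x by (cases t) (auto simp: ccons_def chains_def split: if_splits)
  qed
qed

lemma chains_card:
  "finite (chains lo hi k D) \<and>
   card (chains lo hi k D) =
     (if int (card {t. t \<le> k \<and> D t}) \<le> hi - lo
      then (nat (hi - lo - int (card {t. t \<le> k \<and> D t})) + k) choose k else 0)"
proof (induction k arbitrary: lo D)
  case 0
  have "chains lo hi 0 D = (if lo \<le> hi \<and> (D 0 \<longrightarrow> lo < hi) then {\<lambda>t. if t = 0 then lo else if t = 1 then hi else 0} else {})"
    unfolding chains_def by (auto simp: fun_eq_iff)
  moreover have "{t. t \<le> 0 \<and> D t} = (if D 0 then {0} else {})" by auto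
  ultimately show ?case by auto
next
  case (Suc k)
  define D' where "D' = (\<lambda>t. D (Suc t))"
  define d' where "d' = card {t. t \<le> k \<and> D' t}"
  define \<delta> :: int where "\<delta> = (if D 0 then 1 else 0)"
  have dsplit: "{t. t \<le> Suc k \<and> D t} = (if D 0 then {0} else {}) \<union> Suc ` {t. t \<le> k \<and> D' t}"
    unfolding D'_def
  proof (intro equalityI subsetI)
    fix t assume "t \<in> {t. t \<le> Suc k \<and> D t}"
    then show "t \<in> (if D 0 then {0} else {}) \<union> Suc ` {t. t \<le> k \<and> D (Suc t)}"
      by (cases t) auto
  qed (auto split: if_splits)
  have "card {t. t \<le> Suc k \<and> D t} = d' + (if D 0 then 1 else 0)"
    unfolding dsplit d'_def by (auto simp: card_image)
  then have dd: "int (card {t. t \<le> Suc k \<and> D t}) = int d' + \<delta>" unfolding \<delta>_def by auto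
  have inj: "inj_on (ccons lo) X" for X unfolding ccons_def inj_on_def fun_eq_iff
    by (metis diff_Suc_1 nat.distinct(1))
  have disj: "\<forall>x\<in>{lo + \<delta>..hi}. \<forall>y\<in>{lo + \<delta>..hi}. x \<noteq> y \<longrightarrow>
      ccons lo ` chains x hi k D' \<inter> ccons lo ` chains y hi k D' = {}"
    unfolding ccons_def chains_def by (auto simp: fun_eq_iff) (metis diff_Suc_1 nat.distinct(1))
  have fin: "finite (chains x hi k D')" for x using Suc.IH by blast
  have cs: "chains lo hi (Suc k) D = (\<Union>x\<in>{lo + \<delta>..hi}. ccons lo ` chains x hi k D')"
    unfolding \<delta>_def D'_def by (rule chains_Suc)
  have "card (chains lo hi (Suc k) D) = (\<Sum>x\<in>{lo + \<delta>..hi}. card (ccons lo ` chains x hi k D'))"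
    unfolding cs by (rule card_UN_disjoint) (use fin disj in auto)
  also have "\<dots> = (\<Sum>x\<in>{lo + \<delta>..hi}. if int d' \<le> hi - x then (nat (hi - x - int d') + k) choose k else 0)"
    apply (rule sum.cong[OF refl])
    apply (subst card_image[OF inj])
    using Suc.IH[of _ D'] unfolding d'_def by simp
  also have "\<dots> = (if int d' \<le> hi - (lo + \<delta>) then (nat (hi - (lo + \<delta>) - int d') + Suc k) choose (Suc k) else 0)"
    by (rule hockey_gen)
  finally have c: "card (chains lo hi (Suc k) D) = \<dots>" .
  have "finite (chains lo hi (Suc k) D)" unfolding cs using fin by auto
  then show ?case using c dd by (auto simp: algebra_simps)
qed



lemma chain_le:
  fixes g :: "nat \<Rightarrow> 'b::preorder"
  assumes "\<And>t. a \<le> t \<Longrightarrow> t < b \<Longrightarrow> g t \<le> g (Suc t)" "a \<le> i" "i \<le> j" "j \<le> b"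
  shows "g i \<le> g j"
  using assms(3,4)
proof (induction j)
  case 0 then show ?case by simp
next
  case (Suc j)
  show ?case
  proof (cases "i = Suc j")
    case True then show ?thesis by simp
  next
    case False
    then have "g i \<le> g j" using Suc by simp
    also have "g j \<le> g (Suc j)" using assms(1)[of j] Suc False assms(2) by simp
    finally show ?thesis .
  qed
qed

lemma chain_less:
  fixes g :: "nat \<Rightarrow> 'b::preorder"
  assumes "\<And>t. a \<le> t \<Longrightarrow> t < b \<Longrightarrow> g t < g (Suc t)" "a \<le> i" "i < j" "j \<le> b"
  shows "g i < g j"
  using assms(3,4)
proof (induction j)
  case 0 then show ?case by simp
next
  case (Suc j)
  show ?case
  proof (cases "i = j")
    case True then show ?thesis using assms(1)[of j] assms(2) Suc by simp
  next
    case False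
    then have "g i < g j" using Suc by simp
    also have "g j < g (Suc j)" using assms(1)[of j] Suc False assms(2) by simp
    finally show ?thesis .
  qed
qed

lemma chain_gr:
  fixes g :: "nat \<Rightarrow> 'b::preorder"
  assumes "\<And>t. a \<le> t \<Longrightarrow> t < b \<Longrightarrow> g (Suc t) < g t" "a \<le> i" "i < j" "j \<le> b"
  shows "g j < g i"
  using assms(3,4)
proof (induction j)
  case 0 then show ?case by simp
next
  case (Suc j)
  show ?case
  proof (cases "i = j")
    case True then show ?thesis using assms(1)[of j] assms(2) Suc by simp
  next
    case False
    then have "g j < g i" using Suc by simp
    moreover have "g (Suc j) < g j" using assms(1)[of j] Suc False assms(2) by simp
    ultimately show ?thesis using less_trans by blast
  qed
qed

definition idx :: "'a list \<Rightarrow> 'a \<Rightarrow> nat" where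
  "idx ys p = (THE t. t < length ys \<and> ys ! t = p)"

lemma idx_nth: "distinct ys \<Longrightarrow> t < length ys \<Longrightarrow> idx ys (ys ! t) = t"
  unfolding idx_def by (rule the_equality) (auto simp: nth_eq_iff_index_eq)

lemma idx_in: "distinct ys \<Longrightarrow> p \<in> set ys \<Longrightarrow> idx ys p < length ys \<and> ys ! idx ys p = p"
  by (metis idx_nth in_set_conv_nth)

definition vl :: "'a set \<Rightarrow> ('a \<Rightarrow> int) \<Rightarrow> ('a \<Rightarrow> int) \<Rightarrow> 'a \<Rightarrow> int" where
  "vl M \<mu> w p = (if p \<in> M then \<mu> p else w p)"

definition Zi :: "'a set \<Rightarrow> ('a \<Rightarrow> 'a \<Rightarrow> bool) \<Rightarrow> 'a set \<Rightarrow> ('a \<Rightarrow> int) \<Rightarrow> ('a \<Rightarrow> int) set" where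
  "Zi P le M \<mu> = {w. (\<forall>p. p \<notin> P - M \<longrightarrow> w p = 0) \<and> (\<forall>p q. le p q \<longrightarrow> vl M \<mu> w p \<le> vl M \<mu> w q)}"

definition Lg :: "'a set \<Rightarrow> ('a \<Rightarrow> 'a \<Rightarrow> bool) \<Rightarrow> 'a set \<Rightarrow> ('a \<Rightarrow> int) \<Rightarrow> ('a \<Rightarrow> 'k::linorder) \<Rightarrow> 'a list set" where
  "Lg P le M \<mu> \<kappa> = {ys. linear_extension P le ys \<and>
     (\<forall>i j. i < j \<and> j < length ys \<and> ys ! i \<in> M \<and> ys ! j \<in> M \<longrightarrow>
        (\<mu> (ys ! i), \<kappa> (ys ! i)) < (\<mu> (ys ! j), \<kappa> (ys ! j)))}"

definition gdesc :: "('a \<Rightarrow> 'k::linorder) \<Rightarrow> 'a list \<Rightarrow> nat \<Rightarrow> nat \<Rightarrow> nat" where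
  "gdesc \<kappa> ys i j = card {t. i \<le> t \<and> t < j \<and> \<kappa> (ys ! t) > \<kappa> (ys ! Suc t)}"

definition Wset :: "'a set \<Rightarrow> ('a \<Rightarrow> int) \<Rightarrow> ('a \<Rightarrow> 'k::linorder) \<Rightarrow> 'a list \<Rightarrow> (nat \<Rightarrow> int) set" where
  "Wset M \<mu> \<kappa> ys = {w. (\<forall>t. length ys \<le> t \<longrightarrow> w t = 0) \<and>
      (\<forall>t < length ys. ys ! t \<in> M \<longrightarrow> w t = \<mu> (ys ! t)) \<and>
      (\<forall>t. Suc t < length ys \<longrightarrow> w t \<le> w (Suc t) \<and> (\<kappa> (ys ! Suc t) < \<kappa> (ys ! t) \<longrightarrow> w t < w (Suc t)))}"

definition Phi :: "'a set \<Rightarrow> 'a list \<Rightarrow> (nat \<Rightarrow> int) \<Rightarrow> 'a \<Rightarrow> int" where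
  "Phi M ys w = (\<lambda>p. if p \<in> set ys \<and> p \<notin> M then w (idx ys p) else 0)"

locale cnt =
  fixes P :: "'a set" and le :: "'a \<Rightarrow> 'a \<Rightarrow> bool" and M :: "'a set"
    and \<mu> :: "'a \<Rightarrow> int" and \<kappa> :: "'a \<Rightarrow> 'k::linorder"
  assumes fp: "finite_poset P le"
    and MP: "M \<subseteq> P"
    and minmax: "poset_min P le \<union> poset_max P le \<subseteq> M"
    and kinj: "inj_on \<kappa> P"
    and kmono: "\<And>p q. le p q \<Longrightarrow> \<kappa> p \<le> \<kappa> q"
begin

lemma le_in: "le p q \<Longrightarrow> p \<in> P \<and> q \<in> P"
  using fp unfolding finite_poset_def by blast

lemma finP: "finite P" using fp unfolding finite_poset_def by blast

lemma vl_Phi: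
  assumes ys: "ys \<in> Lg P le M \<mu> \<kappa>" and w: "w \<in> Wset M \<mu> \<kappa> ys" and t: "t < length ys"
  shows "vl M \<mu> (Phi M ys w) (ys ! t) = w t"
proof -
  have d: "distinct ys" using ys unfolding Lg_def linear_extension_def by blast
  show ?thesis using w t unfolding vl_def Phi_def Wset_def by (auto simp: idx_nth[OF d])
qed

lemma Phi_in:
  assumes ys: "ys \<in> Lg P le M \<mu> \<kappa>" and w: "w \<in> Wset M \<mu> \<kappa> ys"
  shows "Phi M ys w \<in> Zi P le M \<mu>"
proof -
  have d: "distinct ys" and s: "set ys = P"
    and le: "\<forall>i<length ys. \<forall>j<length ys. le (ys ! i) (ys ! j) \<longrightarrow> i \<le> j"
    using ys unfolding Lg_def linear_extension_def by auto
  have mono: "w i \<le> w j" if "i \<le> j" "j < length ys" for i j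
    by (rule chain_le[where a=0 and b="j"]) (use w that in \<open>auto simp: Wset_def\<close>)
  show ?thesis unfolding Zi_def mem_Collect_eq
  proof (intro conjI allI impI)
    fix p assume "p \<notin> P - M" then show "Phi M ys w p = 0" using s by (auto simp: Phi_def)
  next
    fix p q assume pq: "le p q"
    then have pP: "p \<in> set ys" and qP: "q \<in> set ys" using le_in s by auto
    define i where "i = idx ys p"
    define j where "j = idx ys q"
    have i: "i < length ys" "ys ! i = p" using idx_in[OF d pP] i_def by auto
    have j: "j < length ys" "ys ! j = q" using idx_in[OF d qP] j_def by auto
    have "i \<le> j" using le i j pq by auto
    then show "vl M \<mu> (Phi M ys w) p \<le> vl M \<mu> (Phi M ys w) q"
      using vl_Phi[OF ys w i(1)] vl_Phi[OF ys w j(1)] i j mono by auto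
  qed
qed

lemma Phi_inj:
  assumes ys: "ys \<in> Lg P le M \<mu> \<kappa>"
  shows "inj_on (Phi M ys) (Wset M \<mu> \<kappa> ys)"
proof (rule inj_onI)
  fix w1 w2 assume w1: "w1 \<in> Wset M \<mu> \<kappa> ys" and w2: "w2 \<in> Wset M \<mu> \<kappa> ys"
    and eq: "Phi M ys w1 = Phi M ys w2"
  show "w1 = w2"
  proof
    fix t
    show "w1 t = w2 t"
    proof (cases "t < length ys")
      case True
      then show ?thesis using vl_Phi[OF ys w1 True] vl_Phi[OF ys w2 True] eq by simp
    next
      case False
      then show ?thesis using w1 w2 by (simp add: Wset_def)
    qed
  qed
qed

lemma Phi_sorted:
  assumes ys: "ys \<in> Lg P le M \<mu> \<kappa>" and w: "w \<in> Wset M \<mu> \<kappa> ys"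
  shows "sorted_wrt (<) (map (\<lambda>p. (vl M \<mu> (Phi M ys w) p, \<kappa> p)) ys)"
proof -
  define f where "f = (\<lambda>p. (vl M \<mu> (Phi M ys w) p, \<kappa> p))"
  have d: "distinct ys" and s: "set ys = P"
    using ys unfolding Lg_def linear_extension_def by auto
  have adj: "f (ys ! t) < f (ys ! Suc t)" if "Suc t < length ys" for t
  proof -
    have a: "w t \<le> w (Suc t)" "\<kappa> (ys ! Suc t) < \<kappa> (ys ! t) \<longrightarrow> w t < w (Suc t)"
      using w that by (auto simp: Wset_def)
    have "ys ! t \<noteq> ys ! Suc t" using d that by (simp add: nth_eq_iff_index_eq)
    then have "\<kappa> (ys ! t) \<noteq> \<kappa> (ys ! Suc t)"
      using kinj s that by (metis Suc_lessD inj_on_contraD nth_mem)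
    then show ?thesis using a vl_Phi[OF ys w, of t] vl_Phi[OF ys w, of "Suc t"] that
      unfolding f_def by (auto simp: less_prod_def)
  qed
  have "f (ys ! i) < f (ys ! j)" if "i < j" "j < length ys" for i j
    by (rule chain_less[where a=0 and b=j]) (use adj that in auto)
  then show ?thesis unfolding sorted_wrt_iff_nth_less f_def[symmetric] by auto
qed

lemma Phi_disj:
  assumes ys1: "ys1 \<in> Lg P le M \<mu> \<kappa>" and w1: "w1 \<in> Wset M \<mu> \<kappa> ys1"
    and ys2: "ys2 \<in> Lg P le M \<mu> \<kappa>" and w2: "w2 \<in> Wset M \<mu> \<kappa> ys2"
    and eq: "Phi M ys1 w1 = Phi M ys2 w2"
  shows "ys1 = ys2"
proof -
  define f where "f = (\<lambda>p. (vl M \<mu> (Phi M ys1 w1) p, \<kappa> p))"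
  have s1: "set ys1 = P" and s2: "set ys2 = P"
    using ys1 ys2 unfolding Lg_def linear_extension_def by auto
  have "sorted_wrt (<) (map f ys1)" using Phi_sorted[OF ys1 w1] f_def by simp
  moreover have "sorted_wrt (<) (map f ys2)" using Phi_sorted[OF ys2 w2] f_def eq by simp
  moreover have "set (map f ys2) = set (map f ys1)" using s1 s2 by simp
  ultimately have "map f ys2 = map f ys1" by (rule strict_sorted_equal)
  moreover have "inj_on f (set ys2 \<union> set ys1)" using kinj s1 s2 unfolding f_def inj_on_def by auto
  ultimately show ?thesis by (metis map_inj_on)
qed

lemma Phi_cover:
  assumes z: "z \<in> Zi P le M \<mu>"
  shows "\<exists>ys\<in>Lg P le M \<mu> \<kappa>. \<exists>w\<in>Wset M \<mu> \<kappa> ys. z = Phi M ys w"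
proof -
  define f where "f = (\<lambda>p. (vl M \<mu> z p, \<kappa> p))"
  have finj: "inj_on f P"
  proof (rule inj_onI)
    fix x y assume "x \<in> P" "y \<in> P" "f x = f y"
    then show "x = y" using kinj unfolding f_def by (auto dest: inj_onD)
  qed
  have "finite (f ` P)" using finP by simp
  then have "\<exists>!S. sorted_wrt (<) S \<and> set S = f ` P" by (rule ex1_sorted_list_for_set_if_finite)
  then obtain S where S: "sorted_wrt (<) S" "set S = f ` P" by blast
  define ys where "ys = map (the_inv_into P f) S"
  have mys: "map f ys = S" unfolding ys_def map_map
  proof (rule map_idI)
    fix x assume "x \<in> set S"
    then show "(f \<circ> the_inv_into P f) x = x" using S(2) f_the_inv_into_f[OF finj] by simp
  qed
  have sys: "set ys = P" unfolding ys_def using S finj by simp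
  have "distinct S" using S(1) strict_sorted_iff by blast
  then have "distinct (map f ys)" using mys by simp
  then have dys: "distinct ys" by (simp add: distinct_map)
  have lt: "f (ys ! i) < f (ys ! j)" if "i < j" "j < length ys" for i j
  proof -
    have "map f ys ! i < map f ys ! j" using S(1) that unfolding mys[symmetric] sorted_wrt_iff_nth_less by simp
    then show ?thesis using that by simp
  qed
  have zmono: "le p q \<Longrightarrow> vl M \<mu> z p \<le> vl M \<mu> z q" for p q using z unfolding Zi_def by blast
  have fmono: "le p q \<Longrightarrow> f p \<le> f q" for p q
    using zmono[of p q] kmono[of p q] unfolding f_def by (auto simp: less_eq_prod_def)
  have linext: "linear_extension P le ys"
    unfolding linear_extension_def
  proof (intro conjI allI impI dys sys)
    fix i j assume "i < length ys" "j < length ys" "le (ys ! i) (ys ! j)"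
    show "i \<le> j"
    proof (rule ccontr)
      assume "\<not> i \<le> j"
      then have "f (ys ! j) < f (ys ! i)" using lt[of j i] \<open>i < length ys\<close> by simp
      moreover have "f (ys ! i) \<le> f (ys ! j)" using fmono \<open>le (ys ! i) (ys ! j)\<close> by blast
      ultimately show False by (simp add: leD)
    qed
  qed
  have ysL: "ys \<in> Lg P le M \<mu> \<kappa>"
    unfolding Lg_def mem_Collect_eq
  proof (intro conjI allI impI linext)
    fix i j assume "i < j \<and> j < length ys \<and> ys ! i \<in> M \<and> ys ! j \<in> M"
    then show "(\<mu> (ys ! i), \<kappa> (ys ! i)) < (\<mu> (ys ! j), \<kappa> (ys ! j))"
      using lt[of i j] unfolding f_def vl_def by simp
  qed
  define w where "w = (\<lambda>t. if t < length ys then vl M \<mu> z (ys ! t) else 0)"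
  have wW: "w \<in> Wset M \<mu> \<kappa> ys"
    unfolding Wset_def mem_Collect_eq
  proof (intro conjI allI impI)
    fix t assume "Suc t < length ys"
    then have "f (ys ! t) < f (ys ! Suc t)" using lt by simp
    then show "w t \<le> w (Suc t)" and "\<kappa> (ys ! Suc t) < \<kappa> (ys ! t) \<Longrightarrow> w t < w (Suc t)"
      using \<open>Suc t < length ys\<close> unfolding w_def f_def by (auto simp: less_prod_def)
  qed (auto simp: w_def vl_def)
  have "z = Phi M ys w"
  proof
    fix p
    show "z p = Phi M ys w p"
    proof (cases "p \<in> set ys \<and> p \<notin> M")
      case True
      then show ?thesis using idx_in[OF dys, of p] unfolding Phi_def w_def vl_def by auto
    next
      case False
      then show ?thesis using z sys unfolding Phi_def Zi_def by auto
    qed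
  qed
  then show ?thesis using ysL wW by blast
qed

lemma Zi_Union: "Zi P le M \<mu> = (\<Union>ys\<in>Lg P le M \<mu> \<kappa>. Phi M ys ` Wset M \<mu> \<kappa> ys)"
proof (intro equalityI subsetI)
  fix z assume "z \<in> Zi P le M \<mu>"
  from Phi_cover[OF this] obtain ys w where "ys \<in> Lg P le M \<mu> \<kappa>" "w \<in> Wset M \<mu> \<kappa> ys" "z = Phi M ys w"
    by blast
  then show "z \<in> (\<Union>ys\<in>Lg P le M \<mu> \<kappa>. Phi M ys ` Wset M \<mu> \<kappa> ys)" by blast
next
  fix z assume "z \<in> (\<Union>ys\<in>Lg P le M \<mu> \<kappa>. Phi M ys ` Wset M \<mu> \<kappa> ys)"
  then obtain ys w where "ys \<in> Lg P le M \<mu> \<kappa>" "w \<in> Wset M \<mu> \<kappa> ys" "z = Phi M ys w"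
    by blast
  then show "z \<in> Zi P le M \<mu>" using Phi_in by simp
qed

lemma Lg_finite: "finite (Lg P le M \<mu> \<kappa>)"
proof -
  have "Lg P le M \<mu> \<kappa> \<subseteq> {ys. set ys \<subseteq> P \<and> length ys \<le> card P}"
    unfolding Lg_def linear_extension_def by (auto simp: distinct_card[symmetric])
  moreover have "finite {ys. set ys \<subseteq> P \<and> length ys \<le> card P}"
    using finite_lists_length_le[OF finP] by simp
  ultimately show ?thesis by (rule finite_subset)
qed

end


definition Tb :: "('a \<Rightarrow> int) \<Rightarrow> ('a \<Rightarrow> 'k::linorder) \<Rightarrow> 'a list \<Rightarrow> nat \<times> nat \<Rightarrow> (nat \<Rightarrow> int) set" where
  "Tb \<mu> \<kappa> ys = (\<lambda>(i, j). chains (\<mu> (ys ! i)) (\<mu> (ys ! j)) (j - i - 1)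
       (\<lambda>t. \<kappa> (ys ! Suc (t + i)) < \<kappa> (ys ! (t + i))))"

definition Psi :: "'a set \<Rightarrow> 'a list \<Rightarrow> (nat \<Rightarrow> int) \<Rightarrow> nat \<times> nat \<Rightarrow> nat \<Rightarrow> int" where
  "Psi M ys w = restrict (\<lambda>(i, j). \<lambda>t. if t \<le> j - i then w (t + i) else 0) (consecutive_marked M ys)"

lemma gval:
  fixes m :: int and d k :: nat
  assumes "int d \<le> m + int k"
  shows "real (if int d \<le> m then (nat (m - int d) + k) choose k else 0)
         = (real_of_int m - real d + real k) gchoose k"
proof (cases "int d \<le> m")
  case True
  have "real ((nat (m - int d) + k) choose k) = real (nat (m - int d) + k) gchoose k"
    by (rule binomial_gbinomial)
  moreover have "real (nat (m - int d) + k) = real_of_int m - real d + real k" using True by simp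
  ultimately show ?thesis using True by simp
next
  case False
  define v where "v = nat (m - int d + int k)"
  have v: "real v = real_of_int m - real d + real k" using assms unfolding v_def by simp
  have "v < k" using False assms unfolding v_def by simp
  then have "real (v choose k) = 0" by simp
  then have "real v gchoose k = 0" by (simp add: binomial_gbinomial)
  then show ?thesis using False v by simp
qed

context cnt
begin

lemma first_last:
  assumes ys: "ys \<in> Lg P le M \<mu> \<kappa>" and ne: "ys \<noteq> []"
  shows "ys ! 0 \<in> M" "ys ! (length ys - 1) \<in> M"
proof -
  have d: "distinct ys" and s: "set ys = P"
    and le: "\<forall>i<length ys. \<forall>j<length ys. le (ys ! i) (ys ! j) \<longrightarrow> i \<le> j"
    using ys unfolding Lg_def linear_extension_def by auto
  have "ys ! 0 \<in> poset_min P le"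
    unfolding poset_min_def
  proof (intro CollectI conjI ballI impI)
    show "ys ! 0 \<in> P" using s ne by auto
    fix q assume "q \<in> P" "le q (ys ! 0)"
    then obtain j where "j < length ys" "ys ! j = q" using s by (metis in_set_conv_nth)
    then show "q = ys ! 0" using le \<open>le q (ys ! 0)\<close> ne by fastforce
  qed
  then show "ys ! 0 \<in> M" using minmax by blast
  have "ys ! (length ys - 1) \<in> poset_max P le"
    unfolding poset_max_def
  proof (intro CollectI conjI ballI impI)
    show "ys ! (length ys - 1) \<in> P" using s ne by auto
    fix q assume "q \<in> P" "le (ys ! (length ys - 1)) q"
    then obtain j where j: "j < length ys" "ys ! j = q" using s by (metis in_set_conv_nth)
    then have "length ys - 1 \<le> j" using le \<open>le (ys ! (length ys - 1)) q\<close> ne by auto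
    then have "j = length ys - 1" using j by simp
    then show "q = ys ! (length ys - 1)" using j by simp
  qed
  then show "ys ! (length ys - 1) \<in> M" using minmax by blast
qed

lemma blk2:
  assumes ys: "ys \<in> Lg P le M \<mu> \<kappa>" and t: "Suc t < length ys"
  shows "\<exists>i j. (i, j) \<in> consecutive_marked M ys \<and> i \<le> t \<and> t < j"
proof -
  have ne: "ys \<noteq> []" using t by auto
  note fl = first_last[OF ys ne]
  define A where "A = {s. s \<le> t \<and> ys ! s \<in> M}"
  define B where "B = {s. t < s \<and> s < length ys \<and> ys ! s \<in> M}"
  have A: "finite A" "A \<noteq> {}" using fl unfolding A_def by auto
  have B: "finite B" "B \<noteq> {}" using fl t unfolding B_def by (auto intro!: exI[of _ "length ys - 1"])
  define i where "i = Max A"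
  define j where "j = Min B"
  have iA: "i \<in> A" unfolding i_def using A by simp
  have jB: "j \<in> B" unfolding j_def using B by simp
  have "(i, j) \<in> consecutive_marked M ys"
    unfolding consecutive_marked_def
  proof (simp, intro conjI allI impI)
    show "i < j" using iA jB unfolding A_def B_def by simp
    show "j < length ys" "ys ! i \<in> M" "ys ! j \<in> M" using iA jB unfolding A_def B_def by auto
    fix s assume s: "i < s \<and> s < j"
    show "ys ! s \<notin> M"
    proof
      assume m: "ys ! s \<in> M"
      show False
      proof (cases "s \<le> t")
        case True
        then have "s \<in> A" using m unfolding A_def by simp
        then have "s \<le> i" unfolding i_def using A by simp
        then show False using s by simp
      next
        case False
        then have "s \<in> B" using m s jB unfolding B_def by simp
        then have "j \<le> s" unfolding j_def using B by simp
        then show False using s by simp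
      qed
    qed
  qed
  moreover have "i \<le> t" "t < j" using iA jB unfolding A_def B_def by auto
  ultimately show ?thesis by blast
qed

lemma blk1:
  assumes ys: "ys \<in> Lg P le M \<mu> \<kappa>" and t: "t < length ys" and um: "ys ! t \<notin> M"
  shows "\<exists>i j. (i, j) \<in> consecutive_marked M ys \<and> i < t \<and> t < j"
proof (cases "Suc t < length ys")
  case True
  then obtain i j where ij: "(i, j) \<in> consecutive_marked M ys" "i \<le> t" "t < j" using blk2[OF ys] by blast
  then have "i \<noteq> t" using um unfolding consecutive_marked_def by auto
  then show ?thesis using ij by force
next
  case False
  then have "t = length ys - 1" using t by simp
  moreover have "ys \<noteq> []" using t by auto
  ultimately show ?thesis using first_last(2)[OF ys] um by auto
qed

lemma blk_uniq:
  assumes "(i, j) \<in> consecutive_marked M ys" "(i', j') \<in> consecutive_marked M ys"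
    "i < t" "t < j" "i' < t" "t < j'"
  shows "i = i' \<and> j = j'"
proof -
  have a: "\<And>s. i < s \<Longrightarrow> s < j \<Longrightarrow> ys ! s \<notin> M" "\<And>s. i' < s \<Longrightarrow> s < j' \<Longrightarrow> ys ! s \<notin> M"
    "ys ! i \<in> M" "ys ! j \<in> M" "ys ! i' \<in> M" "ys ! j' \<in> M"
    using assms(1,2) unfolding consecutive_marked_def by auto
  have "i = i'" using a(1)[of i'] a(2)[of i] a(3) a(5) assms(3-6) by (cases i i' rule: linorder_cases) auto
  moreover have "j = j'" using a(1)[of j'] a(2)[of j] a(4) a(6) assms(3-6) by (cases j j' rule: linorder_cases) auto
  ultimately show ?thesis by simp
qed

lemma Psi_in:
  assumes ys: "ys \<in> Lg P le M \<mu> \<kappa>" and w: "w \<in> Wset M \<mu> \<kappa> ys"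
  shows "Psi M ys w \<in> (\<Pi>\<^sub>E b\<in>consecutive_marked M ys. Tb \<mu> \<kappa> ys b)"
  unfolding Psi_def restrict_PiE_iff
proof (intro ballI)
  fix b assume b: "b \<in> consecutive_marked M ys"
  obtain i j where bij: "b = (i, j)" by (cases b)
  have ij: "i < j" "j < length ys" "ys ! i \<in> M" "ys ! j \<in> M"
    using b bij unfolding consecutive_marked_def by auto
  have W: "\<And>t. t < length ys \<Longrightarrow> ys ! t \<in> M \<Longrightarrow> w t = \<mu> (ys ! t)"
    "\<And>t. Suc t < length ys \<Longrightarrow> w t \<le> w (Suc t)"
    "\<And>t. Suc t < length ys \<Longrightarrow> \<kappa> (ys ! Suc t) < \<kappa> (ys ! t) \<Longrightarrow> w t < w (Suc t)"
    using w unfolding Wset_def by auto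
  have jj: "Suc (j - i - 1) = j - i" using ij by simp
  show "(case b of (i, j) \<Rightarrow> \<lambda>t. if t \<le> j - i then w (t + i) else 0) \<in> Tb \<mu> \<kappa> ys b"
    unfolding bij Tb_def chains_def
  proof (simp only: prod.case jj, intro CollectI conjI allI impI)
    show "(if 0 \<le> j - i then w (0 + i) else 0) = \<mu> (ys ! i)" using W(1)[of i] ij by simp
    show "(if j - i \<le> j - i then w (j - i + i) else 0) = \<mu> (ys ! j)" using W(1)[of j] ij by simp
    fix t
    show "j - i < t \<Longrightarrow> (if t \<le> j - i then w (t + i) else 0) = 0" by simp
    assume t: "t \<le> j - i - 1"
    then have t1: "Suc t \<le> j - i" "t \<le> j - i" "Suc (t + i) < length ys" using ij by auto
    show "(if t \<le> j - i then w (t + i) else 0) \<le> (if Suc t \<le> j - i then w (Suc t + i) else 0)"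
      using W(2)[OF t1(3)] t1 by simp
    assume "\<kappa> (ys ! Suc (t + i)) < \<kappa> (ys ! (t + i))"
    then show "(if t \<le> j - i then w (t + i) else 0) < (if Suc t \<le> j - i then w (Suc t + i) else 0)"
      using W(3)[OF t1(3)] t1 by simp
  qed
qed

lemma Psi_at:
  assumes "(i, j) \<in> consecutive_marked M ys" "i \<le> t" "t \<le> j"
  shows "Psi M ys w (i, j) (t - i) = w t"
  using assms unfolding Psi_def by auto

lemma Psi_inj:
  assumes ys: "ys \<in> Lg P le M \<mu> \<kappa>"
  shows "inj_on (Psi M ys) (Wset M \<mu> \<kappa> ys)"
proof (rule inj_onI)
  fix w1 w2 assume w1: "w1 \<in> Wset M \<mu> \<kappa> ys" and w2: "w2 \<in> Wset M \<mu> \<kappa> ys"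
    and eq: "Psi M ys w1 = Psi M ys w2"
  show "w1 = w2"
  proof
    fix t
    show "w1 t = w2 t"
    proof (cases "t < length ys")
      case True
      show ?thesis
      proof (cases "ys ! t \<in> M")
        case True
        then show ?thesis using w1 w2 \<open>t < length ys\<close> by (simp add: Wset_def)
      next
        case False
        then obtain i j where ij: "(i, j) \<in> consecutive_marked M ys" "i < t" "t < j"
          using blk1[OF ys \<open>t < length ys\<close>] by blast
        then show ?thesis using Psi_at[OF ij(1), of t w1] Psi_at[OF ij(1), of t w2] eq by simp
      qed
    next
      case False
      then show ?thesis using w1 w2 by (simp add: Wset_def)
    qed
  qed
qed

lemma Psi_surj:
  assumes ys: "ys \<in> Lg P le M \<mu> \<kappa>"
    and F: "F \<in> (\<Pi>\<^sub>E b\<in>consecutive_marked M ys. Tb \<mu> \<kappa> ys b)"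
  shows "\<exists>w\<in>Wset M \<mu> \<kappa> ys. F = Psi M ys w"
proof -
  let ?CM = "consecutive_marked M ys"
  define blk where "blk = (\<lambda>t. SOME b. b \<in> ?CM \<and> fst b < t \<and> t < snd b)"
  define w where "w = (\<lambda>t. if length ys \<le> t then 0 else if ys ! t \<in> M then \<mu> (ys ! t)
                          else F (blk t) (t - fst (blk t)))"
  have Fch: "F (i, j) \<in> Tb \<mu> \<kappa> ys (i, j)" if "(i, j) \<in> ?CM" for i j
    using F that unfolding PiE_iff by blast
  have key: "w t = F (i, j) (t - i)" if ij: "(i, j) \<in> ?CM" "i \<le> t" "t \<le> j" for i j t
  proof -
    have c: "i < j" "j < length ys" "ys ! i \<in> M" "ys ! j \<in> M"
      "\<And>s. i < s \<Longrightarrow> s < j \<Longrightarrow> ys ! s \<notin> M"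
      using ij(1) unfolding consecutive_marked_def by auto
    have jj: "Suc (j - i - 1) = j - i" using c by simp
    have ch: "F (i, j) 0 = \<mu> (ys ! i)" "F (i, j) (j - i) = \<mu> (ys ! j)"
      using Fch[OF ij(1)] unfolding Tb_def chains_def by (simp_all only: prod.case jj mem_Collect_eq)
    consider "t = i" | "t = j" | "i < t \<and> t < j" using ij by linarith
    then show ?thesis
    proof cases
      case 1 then show ?thesis using ch c unfolding w_def by simp
    next
      case 2 then show ?thesis using ch c unfolding w_def by simp
    next
      case 3
      have ex: "\<exists>b. b \<in> ?CM \<and> fst b < t \<and> t < snd b" using ij(1) 3 by (intro exI[of _ "(i, j)"]) simp
      have bb: "blk t \<in> ?CM \<and> fst (blk t) < t \<and> t < snd (blk t)"
        unfolding blk_def by (rule someI_ex[OF ex])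
      then have "(fst (blk t), snd (blk t)) \<in> ?CM" by simp
      then have "i = fst (blk t) \<and> j = snd (blk t)"
        using blk_uniq[OF ij(1), of "fst (blk t)" "snd (blk t)" t] 3 bb by blast
      then have "blk t = (i, j)" by (simp add: prod_eq_iff)
      then show ?thesis using 3 c unfolding w_def by simp
    qed
  qed
  have wW: "w \<in> Wset M \<mu> \<kappa> ys"
    unfolding Wset_def mem_Collect_eq
  proof (intro conjI allI impI)
    fix t assume t: "Suc t < length ys"
    then obtain i j where ij: "(i, j) \<in> ?CM" "i \<le> t" "t < j" using blk2[OF ys] by blast
    have c: "i < j" "j < length ys" using ij(1) unfolding consecutive_marked_def by auto
    have jj: "Suc (j - i - 1) = j - i" using c by simp
    have e1: "w t = F (i, j) (t - i)" using key[OF ij(1)] ij by simp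
    have e2: "w (Suc t) = F (i, j) (Suc (t - i))" using key[OF ij(1), of "Suc t"] ij by (simp add: Suc_diff_le)
    have tt: "t - i \<le> j - i - 1" "t - i + i = t" using ij by auto
    have ch: "\<forall>s\<le>j - i - 1. F (i, j) s \<le> F (i, j) (Suc s) \<and>
        (\<kappa> (ys ! Suc (s + i)) < \<kappa> (ys ! (s + i)) \<longrightarrow> F (i, j) s < F (i, j) (Suc s))"
      using Fch[OF ij(1)] unfolding Tb_def chains_def by simp
    have ch1: "F (i, j) (t - i) \<le> F (i, j) (Suc (t - i))"
      "\<kappa> (ys ! Suc (t - i + i)) < \<kappa> (ys ! (t - i + i)) \<Longrightarrow> F (i, j) (t - i) < F (i, j) (Suc (t - i))"
      using ch tt(1) by blast+
    show "w t \<le> w (Suc t)" using ch1(1) e1 e2 by simp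
    show "\<kappa> (ys ! Suc t) < \<kappa> (ys ! t) \<Longrightarrow> w t < w (Suc t)" using ch1(2) e1 e2 tt(2) by simp
  next
    fix t assume "length ys \<le> t" then show "w t = 0" by (simp add: w_def)
  next
    fix t assume "t < length ys" "ys ! t \<in> M" then show "w t = \<mu> (ys ! t)" by (simp add: w_def)
  qed
  have "F = Psi M ys w"
  proof (rule ext)
    fix b
    show "F b = Psi M ys w b"
    proof (cases "b \<in> ?CM")
      case False
      have "F b = undefined" by (rule PiE_arb[OF F False])
      moreover have "Psi M ys w b = undefined" using False unfolding Psi_def by simp
      ultimately show ?thesis by simp
    next
      case True
      obtain i j where bij: "b = (i, j)" by (cases b)
      have inCM: "(i, j) \<in> ?CM" using True bij by simp
      have c: "i < j" using inCM unfolding consecutive_marked_def by simp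
      have jj: "Suc (j - i - 1) = j - i" using c by simp
      have chz: "\<forall>t > Suc (j - i - 1). F (i, j) t = 0"
        using Fch[OF inCM] unfolding Tb_def prod.case chains_def mem_Collect_eq by blast
      have "F (i, j) t = Psi M ys w (i, j) t" for t
      proof -
        have ps: "Psi M ys w (i, j) t = (if t \<le> j - i then w (t + i) else 0)"
          unfolding Psi_def using inCM by simp
        show ?thesis
        proof (cases "t \<le> j - i")
          case True
          have "w (t + i) = F (i, j) (t + i - i)" using key[OF inCM, of "t + i"] True c by linarith
          then show ?thesis using ps True by simp
        next
          case False
          then have "F (i, j) t = 0" using chz jj by simp
          then show ?thesis using ps False by simp
        qed
      qed
      then show ?thesis using bij by auto
    qed
  qed
  then show ?thesis using wW by blast
qed

lemma Wset_card:
  assumes ys: "ys \<in> Lg P le M \<mu> \<kappa>"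
  shows "finite (Wset M \<mu> \<kappa> ys) \<and>
         card (Wset M \<mu> \<kappa> ys) = (\<Prod>b\<in>consecutive_marked M ys. card (Tb \<mu> \<kappa> ys b))"
proof -
  let ?CM = "consecutive_marked M ys"
  have finCM: "finite ?CM"
    by (rule finite_subset[of _ "{..<length ys} \<times> {..<length ys}"]) (auto simp: consecutive_marked_def)
  have bij: "bij_betw (Psi M ys) (Wset M \<mu> \<kappa> ys) (\<Pi>\<^sub>E b\<in>?CM. Tb \<mu> \<kappa> ys b)"
    unfolding bij_betw_def
  proof
    show "inj_on (Psi M ys) (Wset M \<mu> \<kappa> ys)" by (rule Psi_inj[OF ys])
    show "Psi M ys ` Wset M \<mu> \<kappa> ys = (\<Pi>\<^sub>E b\<in>?CM. Tb \<mu> \<kappa> ys b)"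
    proof (intro equalityI subsetI)
      fix F assume "F \<in> Psi M ys ` Wset M \<mu> \<kappa> ys"
      then obtain w where "w \<in> Wset M \<mu> \<kappa> ys" "F = Psi M ys w" by (rule imageE)
      then show "F \<in> (\<Pi>\<^sub>E b\<in>?CM. Tb \<mu> \<kappa> ys b)" using Psi_in[OF ys] by simp
    next
      fix F assume "F \<in> (\<Pi>\<^sub>E b\<in>?CM. Tb \<mu> \<kappa> ys b)"
      then obtain w where "w \<in> Wset M \<mu> \<kappa> ys" "F = Psi M ys w" using Psi_surj[OF ys] by blast
      then show "F \<in> Psi M ys ` Wset M \<mu> \<kappa> ys" by blast
    qed
  qed
  have finT: "finite (Tb \<mu> \<kappa> ys b)" for b
    unfolding Tb_def using chains_card by (auto split: prod.splits)
  have "finite (\<Pi>\<^sub>E b\<in>?CM. Tb \<mu> \<kappa> ys b)" using finCM finT by (simp add: finite_PiE)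
  then show ?thesis using bij bij_betw_finite bij_betw_same_card card_PiE[OF finCM] by metis
qed

lemma Tb_val:
  assumes ys: "ys \<in> Lg P le M \<mu> \<kappa>" and ij: "(i, j) \<in> consecutive_marked M ys"
  shows "real (card (Tb \<mu> \<kappa> ys (i, j))) =
    (real_of_int (\<mu> (ys ! j) - \<mu> (ys ! i)) - real (gdesc \<kappa> ys i j) + real (j - i - 1)) gchoose (j - i - 1)"
proof -
  have c: "i < j" "j < length ys" "ys ! i \<in> M" "ys ! j \<in> M"
    using ij unfolding consecutive_marked_def by auto
  have lex: "(\<mu> (ys ! i), \<kappa> (ys ! i)) < (\<mu> (ys ! j), \<kappa> (ys ! j))"
  proof -
    have "\<forall>i j. i < j \<and> j < length ys \<and> ys ! i \<in> M \<and> ys ! j \<in> M \<longrightarrow>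
        (\<mu> (ys ! i), \<kappa> (ys ! i)) < (\<mu> (ys ! j), \<kappa> (ys ! j))"
      using ys unfolding Lg_def by simp
    then show ?thesis using c by simp
  qed
  define C where "C = {t. t \<le> j - i - 1 \<and> \<kappa> (ys ! Suc (t + i)) < \<kappa> (ys ! (t + i))}"
  define G where "G = {t. i \<le> t \<and> t < j \<and> \<kappa> (ys ! t) > \<kappa> (ys ! Suc t)}"
  have GC: "G = (\<lambda>t. t + i) ` C"
  proof (intro equalityI subsetI)
    fix t assume "t \<in> G"
    then have "t - i \<in> C" "t = t - i + i" unfolding G_def C_def using c by auto
    then show "t \<in> (\<lambda>t. t + i) ` C" by blast
  qed (use c in \<open>auto simp: G_def C_def\<close>)
  have cardC: "card C = gdesc \<kappa> ys i j"
    unfolding gdesc_def G_def[symmetric] GC by (simp add: card_image)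
  have Gsub: "G \<subseteq> {i..<j}" unfolding G_def by auto
  have dle: "card G \<le> j - i" using card_mono[OF _ Gsub] by simp
  have CG: "card C = card G" unfolding GC by (simp add: card_image)
  have lex': "\<mu> (ys ! i) < \<mu> (ys ! j) \<or> (\<mu> (ys ! i) = \<mu> (ys ! j) \<and> \<kappa> (ys ! i) < \<kappa> (ys ! j))"
    using lex unfolding less_prod_def by auto
  have cond: "int (card C) \<le> (\<mu> (ys ! j) - \<mu> (ys ! i)) + int (j - i - 1)"
  proof (cases "card G = j - i")
    case True
    have Geq: "G = {i..<j}" using card_subset_eq[OF finite_atLeastLessThan Gsub] True by simp
    have desc: "\<kappa> (ys ! Suc t) < \<kappa> (ys ! t)" if "i \<le> t" "t < j" for t
    proof -
      have "t \<in> G" using Geq that by simp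
      then show ?thesis unfolding G_def by simp
    qed
    have "\<kappa> (ys ! j) < \<kappa> (ys ! i)"
      by (rule chain_gr[of i j "\<lambda>t. \<kappa> (ys ! t)" i j, OF desc]) (use c in simp_all)
    then have "\<not> \<kappa> (ys ! i) < \<kappa> (ys ! j)" by (simp add: not_less less_imp_le)
    then have "\<mu> (ys ! i) < \<mu> (ys ! j)" using lex' by blast
    moreover have "int (card C) \<le> int (j - i)" using CG dle by simp
    moreover have "int (j - i) = int (j - i - 1) + 1" using c by simp
    ultimately show ?thesis by linarith
  next
    case False
    have "\<mu> (ys ! i) \<le> \<mu> (ys ! j)" using lex' by auto
    moreover have "card C \<le> j - i - 1" using False dle CG by simp
    ultimately show ?thesis by linarith
  qed
  have "card (Tb \<mu> \<kappa> ys (i, j)) = (if int (card C) \<le> \<mu> (ys ! j) - \<mu> (ys ! i)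
      then (nat (\<mu> (ys ! j) - \<mu> (ys ! i) - int (card C)) + (j - i - 1)) choose (j - i - 1) else 0)"
    unfolding Tb_def C_def using chains_card by simp
  then show ?thesis using gval[OF cond] cardC by simp
qed

theorem count_main:
  "finite (Zi P le M \<mu>) \<and>
   real (card (Zi P le M \<mu>)) =
    (\<Sum>ys\<in>Lg P le M \<mu> \<kappa>. \<Prod>(i, j)\<in>consecutive_marked M ys.
       (real_of_int (\<mu> (ys ! j) - \<mu> (ys ! i)) - real (gdesc \<kappa> ys i j) + real (j - i - 1)) gchoose (j - i - 1))"
proof -
  have finW: "finite (Phi M ys ` Wset M \<mu> \<kappa> ys)" if "ys \<in> Lg P le M \<mu> \<kappa>" for ys
  proof -
    have "finite (Wset M \<mu> \<kappa> ys)" using Wset_card[OF that] by simp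
    then show ?thesis by (rule finite_imageI)
  qed
  have disj: "\<forall>ys1\<in>Lg P le M \<mu> \<kappa>. \<forall>ys2\<in>Lg P le M \<mu> \<kappa>. ys1 \<noteq> ys2 \<longrightarrow>
      Phi M ys1 ` Wset M \<mu> \<kappa> ys1 \<inter> Phi M ys2 ` Wset M \<mu> \<kappa> ys2 = {}"
  proof (intro ballI impI)
    fix ys1 ys2 assume a: "ys1 \<in> Lg P le M \<mu> \<kappa>" "ys2 \<in> Lg P le M \<mu> \<kappa>" "ys1 \<noteq> ys2"
    show "Phi M ys1 ` Wset M \<mu> \<kappa> ys1 \<inter> Phi M ys2 ` Wset M \<mu> \<kappa> ys2 = {}"
    proof (rule ccontr)
      assume "Phi M ys1 ` Wset M \<mu> \<kappa> ys1 \<inter> Phi M ys2 ` Wset M \<mu> \<kappa> ys2 \<noteq> {}"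
      then obtain z where z1: "z \<in> Phi M ys1 ` Wset M \<mu> \<kappa> ys1" and z2: "z \<in> Phi M ys2 ` Wset M \<mu> \<kappa> ys2"
        by blast
      obtain w1 where "z = Phi M ys1 w1" "w1 \<in> Wset M \<mu> \<kappa> ys1" using z1 by (rule imageE)
      moreover obtain w2 where "z = Phi M ys2 w2" "w2 \<in> Wset M \<mu> \<kappa> ys2" using z2 by (rule imageE)
      ultimately have "ys1 = ys2" using Phi_disj[OF a(1) _ a(2)] by simp
      then show False using a(3) by simp
    qed
  qed
  have finW': "\<forall>ys\<in>Lg P le M \<mu> \<kappa>. finite (Phi M ys ` Wset M \<mu> \<kappa> ys)" using finW by simp
  have fin: "finite (Zi P le M \<mu>)" unfolding Zi_Union by (rule finite_UN_I[OF Lg_finite finW])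
  have "card (Zi P le M \<mu>) = (\<Sum>ys\<in>Lg P le M \<mu> \<kappa>. card (Phi M ys ` Wset M \<mu> \<kappa> ys))"
    unfolding Zi_Union by (rule card_UN_disjoint[OF Lg_finite finW' disj])
  also have "\<dots> = (\<Sum>ys\<in>Lg P le M \<mu> \<kappa>. \<Prod>b\<in>consecutive_marked M ys. card (Tb \<mu> \<kappa> ys b))"
  proof (rule sum.cong[OF refl])
    fix ys assume ys: "ys \<in> Lg P le M \<mu> \<kappa>"
    have "card (Phi M ys ` Wset M \<mu> \<kappa> ys) = card (Wset M \<mu> \<kappa> ys)"
      by (rule card_image[OF Phi_inj[OF ys]])
    then show "card (Phi M ys ` Wset M \<mu> \<kappa> ys) = (\<Prod>b\<in>consecutive_marked M ys. card (Tb \<mu> \<kappa> ys b))"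
      using Wset_card[OF ys] by simp
  qed
  finally have "real (card (Zi P le M \<mu>)) = (\<Sum>ys\<in>Lg P le M \<mu> \<kappa>. \<Prod>b\<in>consecutive_marked M ys. real (card (Tb \<mu> \<kappa> ys b)))"
    by (simp only: of_nat_sum of_nat_prod)
  also have "\<dots> = (\<Sum>ys\<in>Lg P le M \<mu> \<kappa>. \<Prod>(i, j)\<in>consecutive_marked M ys.
       (real_of_int (\<mu> (ys ! j) - \<mu> (ys ! i)) - real (gdesc \<kappa> ys i j) + real (j - i - 1)) gchoose (j - i - 1))"
  proof (rule sum.cong[OF refl])
    fix ys assume ys: "ys \<in> Lg P le M \<mu> \<kappa>"
    show "(\<Prod>b\<in>consecutive_marked M ys. real (card (Tb \<mu> \<kappa> ys b))) = (\<Prod>(i, j)\<in>consecutive_marked M ys.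
       (real_of_int (\<mu> (ys ! j) - \<mu> (ys ! i)) - real (gdesc \<kappa> ys i j) + real (j - i - 1)) gchoose (j - i - 1))"
    proof (rule prod.cong[OF refl])
      fix b assume b: "b \<in> consecutive_marked M ys"
      obtain i j where bij: "b = (i, j)" by (cases b)
      show "real (card (Tb \<mu> \<kappa> ys b)) = (case b of (i, j) \<Rightarrow>
        (real_of_int (\<mu> (ys ! j) - \<mu> (ys ! i)) - real (gdesc \<kappa> ys i j) + real (j - i - 1)) gchoose (j - i - 1))"
        using Tb_val[OF ys, of i j] b bij by simp
    qed
  qed
  finally show ?thesis using fin by (rule conjI[rotated])
qed

end



definition polyfun :: "(real \<Rightarrow> real) \<Rightarrow> bool" where
  "polyfun F \<longleftrightarrow> (\<exists>p. \<forall>x. F x = poly p x)"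

lemma polyfun_const: "polyfun (\<lambda>x. c)"
  unfolding polyfun_def by (rule exI[of _ "[:c:]"]) simp

lemma polyfun_id: "polyfun (\<lambda>x. x)"
  unfolding polyfun_def by (rule exI[of _ "[:0,1:]"]) simp

lemma polyfun_add: "polyfun F \<Longrightarrow> polyfun G \<Longrightarrow> polyfun (\<lambda>x. F x + G x)"
  unfolding polyfun_def by (metis poly_add)

lemma polyfun_mult: "polyfun F \<Longrightarrow> polyfun G \<Longrightarrow> polyfun (\<lambda>x. F x * G x)"
  unfolding polyfun_def by (metis poly_mult)

lemma polyfun_diff: "polyfun F \<Longrightarrow> polyfun G \<Longrightarrow> polyfun (\<lambda>x. F x - G x)"
  unfolding polyfun_def by (metis poly_diff)

lemma polyfun_sum: "(\<And>a. a \<in> A \<Longrightarrow> polyfun (F a)) \<Longrightarrow> polyfun (\<lambda>x. \<Sum>a\<in>A. F a x)"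
proof (induction A rule: infinite_finite_induct)
  case (infinite A) then show ?case by (simp add: polyfun_const)
next
  case empty then show ?case by (simp add: polyfun_const)
next
  case (insert a A) then show ?case by (simp add: polyfun_add)
qed

lemma polyfun_prod: "(\<And>a. a \<in> A \<Longrightarrow> polyfun (F a)) \<Longrightarrow> polyfun (\<lambda>x. \<Prod>a\<in>A. F a x)"
proof (induction A rule: infinite_finite_induct)
  case (infinite A) then show ?case by (simp add: polyfun_const)
next
  case empty then show ?case by (simp add: polyfun_const)
next
  case (insert a A) then show ?case by (simp add: polyfun_mult)
qed

lemma polyfun_gchoose: "polyfun F \<Longrightarrow> polyfun (\<lambda>x. F x gchoose k)"
proof -
  assume F: "polyfun F"
  have "polyfun (\<lambda>x. \<Prod>i = 0..<k. (F x - of_nat i) / of_nat (k - i))"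
    apply (rule polyfun_prod)
    apply (subst divide_inverse)
    apply (rule polyfun_mult[OF _ polyfun_const])
    apply (rule polyfun_diff[OF F polyfun_const])
    done
  then show ?thesis by (simp add: gbinomial_altdef_of_nat)
qed

lemma polyfun_eq_at0:
  assumes "polyfun F" "polyfun G" "\<And>n. n \<ge> 1 \<Longrightarrow> F (real n) = G (real n)"
  shows "F 0 = G 0"
proof -
  obtain p where p: "\<And>x. F x = poly p x" using assms(1) unfolding polyfun_def by blast
  obtain q where q: "\<And>x. G x = poly q x" using assms(2) unfolding polyfun_def by blast
  have "p - q = 0"
  proof (rule ccontr)
    assume "p - q \<noteq> 0"
    then have fin: "finite {x. poly (p - q) x = 0}" by (rule poly_roots_finite)
    have "real ` {1..} \<subseteq> {x. poly (p - q) x = 0}"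
      using assms(3) p q by auto
    then have "finite (real ` {1::nat..})" using fin finite_subset by blast
    then have "finite {1::nat..}" using finite_imageD inj_on_def by (metis of_nat_eq_iff)
    then show False using infinite_Ici[of "1::nat"] by simp
  qed
  then show ?thesis using p q by simp
qed



definition ext_pt :: "'a set \<Rightarrow> ('a \<Rightarrow> real) \<Rightarrow> ('a \<Rightarrow> real) \<Rightarrow> 'a \<Rightarrow> real" where
  "ext_pt M lam x p = (if p \<in> M then lam p else x p)"

lemma min_below:
  assumes fp: "finite_poset P le" and nl: "natural_labeling P le \<omega>"
    and mm: "poset_min P le \<union> poset_max P le \<subseteq> M" and p: "p \<in> P"
  shows "\<exists>a\<in>M. le a p" "\<exists>b\<in>M. le p b"
proof -
  have refl: "le p p" using fp p unfolding finite_poset_def by blast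
  have trans: "\<And>x y z. le x y \<Longrightarrow> le y z \<Longrightarrow> le x z" using fp unfolding finite_poset_def by blast
  have inP: "\<And>x y. le x y \<Longrightarrow> x \<in> P \<and> y \<in> P" using fp unfolding finite_poset_def by blast
  have inj: "inj_on \<omega> P" using nl unfolding natural_labeling_def bij_betw_def by blast
  have mono: "\<And>x y. le x y \<Longrightarrow> \<omega> x \<le> \<omega> y" using nl unfolding natural_labeling_def by blast
  obtain a where a: "le a p" "\<And>q. le q p \<Longrightarrow> \<omega> a \<le> \<omega> q"
    using ex_has_least_nat[of "\<lambda>q. le q p" p \<omega>] refl by blast
  have "a \<in> poset_min P le"
    unfolding poset_min_def
  proof (intro CollectI conjI ballI impI)
    show "a \<in> P" using inP a(1) by blast
    fix q assume q: "q \<in> P" "le q a"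
    then have "\<omega> q \<le> \<omega> a" using mono by blast
    moreover have "\<omega> a \<le> \<omega> q" using a(2) trans q(2) a(1) by blast
    ultimately have "\<omega> q = \<omega> a" by simp
    then show "q = a" using inj q(1) \<open>a \<in> P\<close> by (simp add: inj_on_eq_iff)
  qed
  then show "\<exists>a\<in>M. le a p" using mm a(1) by blast
  obtain b where b: "le p b" "\<And>q. le p q \<Longrightarrow> \<omega> q \<le> \<omega> b"
  proof -
    have bnd: "\<forall>y. le p y \<longrightarrow> \<omega> y < Max (\<omega> ` P) + 1"
    proof (intro allI impI)
      fix y assume "le p y"
      then have "y \<in> P" using inP by blast
      moreover have "finite P" using fp unfolding finite_poset_def by blast
      ultimately have "\<omega> y \<le> Max (\<omega> ` P)" by (intro Max_ge) auto
      then show "\<omega> y < Max (\<omega> ` P) + 1" by simp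
    qed
    show ?thesis using Lattices_Big.ex_has_greatest_nat[of "\<lambda>q. le p q" p \<omega>, OF refl bnd] that by blast
  qed
  have "b \<in> poset_max P le"
    unfolding poset_max_def
  proof (intro CollectI conjI ballI impI)
    show "b \<in> P" using inP b(1) by blast
    fix q assume q: "q \<in> P" "le b q"
    then have "\<omega> b \<le> \<omega> q" using mono by blast
    moreover have "\<omega> q \<le> \<omega> b" using b(2) trans q(2) b(1) by blast
    ultimately have "\<omega> q = \<omega> b" by simp
    then show "q = b" using inj q(1) \<open>b \<in> P\<close> by (simp add: inj_on_eq_iff)
  qed
  then show "\<exists>b\<in>M. le p b" using mm b(1) by blast
qed

lemma Lg_eq:
  assumes "\<And>a b. a \<in> M \<Longrightarrow> b \<in> M \<Longrightarrow>
     ((\<mu> a, \<kappa> a) < (\<mu> b, \<kappa> b)) = (lam a < lam b \<or> (lam a = lam b \<and> \<omega> a < \<omega> b))"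
  shows "Lg P le M \<mu> \<kappa> = marked_linexts P le M lam \<omega>"
  unfolding Lg_def marked_linexts_def
proof (rule Collect_cong)
  fix ys
  show "(linear_extension P le ys \<and>
          (\<forall>i j. i < j \<and> j < length ys \<and> ys ! i \<in> M \<and> ys ! j \<in> M \<longrightarrow>
                 (\<mu> (ys ! i), \<kappa> (ys ! i)) < (\<mu> (ys ! j), \<kappa> (ys ! j)))) =
        (linear_extension P le ys \<and>
          (\<forall>i j. i < j \<and> j < length ys \<and> ys ! i \<in> M \<and> ys ! j \<in> M \<longrightarrow>
                 lam (ys ! i) < lam (ys ! j) \<or> lam (ys ! i) = lam (ys ! j) \<and> \<omega> (ys ! i) < \<omega> (ys ! j)))"
    using assms by (simp cong: conj_cong imp_cong)
qed


lemma vl_scale: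
  assumes li: "\<And>a. a \<in> M \<Longrightarrow> real_of_int (li a) = lam a"
    and wx: "\<And>p. real_of_int (w p) = real m * x p"
  shows "real_of_int (vl M (\<lambda>p. int m * li p) w p) = real m * ext_pt M lam x p"
  using li wx unfolding vl_def ext_pt_def by simp

lemma ehr_Zi:
  assumes li: "\<And>a. a \<in> M \<Longrightarrow> real_of_int (li a) = lam a" and m: "m \<ge> 1"
  shows "ehrhart_count (marked_order_polytope P le M lam) m = card (Zi P le M (\<lambda>p. int m * li p))"
proof -
  let ?Q = "marked_order_polytope P le M lam"
  let ?Z = "Zi P le M (\<lambda>p. int m * li p)"
  let ?emb = "\<lambda>(w::'a \<Rightarrow> int) p. real_of_int (w p)"
  have mpos: "real m > 0" using m by simp
  have Qiff: "x \<in> ?Q \<longleftrightarrow> (\<forall>p. p \<notin> P - M \<longrightarrow> x p = 0) \<and> (\<forall>p q. le p q \<longrightarrow> ext_pt M lam x p \<le> ext_pt M lam x q)" for x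
    unfolding marked_order_polytope_def ext_pt_def by simp
  have Ziff: "w \<in> ?Z \<longleftrightarrow> (\<forall>p. p \<notin> P - M \<longrightarrow> w p = 0) \<and> (\<forall>p q. le p q \<longrightarrow> vl M (\<lambda>p. int m * li p) w p \<le> vl M (\<lambda>p. int m * li p) w q)" for w
    unfolding Zi_def by simp
  have E: "{z \<in> (\<lambda>x p. real m * x p) ` ?Q. \<forall>p. z p \<in> \<int>} = ?emb ` ?Z"
  proof (intro equalityI subsetI)
    fix z assume "z \<in> {z \<in> (\<lambda>x p. real m * x p) ` ?Q. \<forall>p. z p \<in> \<int>}"
    then obtain x where x: "x \<in> ?Q" and zx: "z = (\<lambda>p. real m * x p)" and zi: "\<And>p. z p \<in> \<int>" by blast
    define w where "w = (\<lambda>p. \<lfloor>z p\<rfloor>)"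
    have wz: "real_of_int (w p) = z p" for p unfolding w_def using zi[of p] by (metis Ints_cases floor_of_int)
    have wx: "real_of_int (w p) = real m * x p" for p using wz zx by simp
    have vs: "real_of_int (vl M (\<lambda>p. int m * li p) w p) = real m * ext_pt M lam x p" for p
      using li wx unfolding vl_def ext_pt_def by simp
    have "w \<in> ?Z" unfolding Ziff
    proof (intro conjI allI impI)
      fix p assume "p \<notin> P - M"
      then have "x p = 0" using x Qiff by blast
      then show "w p = 0" using wx[of p] by simp
    next
      fix p q assume "le p q"
      then have "ext_pt M lam x p \<le> ext_pt M lam x q" using x Qiff by blast
      then have "real m * ext_pt M lam x p \<le> real m * ext_pt M lam x q" using mpos by simp
      then have "real_of_int (vl M (\<lambda>p. int m * li p) w p) \<le> real_of_int (vl M (\<lambda>p. int m * li p) w q)"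
        using vs by simp
      then show "vl M (\<lambda>p. int m * li p) w p \<le> vl M (\<lambda>p. int m * li p) w q" by linarith
    qed
    moreover have "z = ?emb w" using wz by (simp add: fun_eq_iff)
    ultimately show "z \<in> ?emb ` ?Z" by blast
  next
    fix z assume "z \<in> ?emb ` ?Z"
    then obtain w where w: "w \<in> ?Z" and zw: "z = ?emb w" by blast
    define x where "x = (\<lambda>p. real_of_int (w p) / real m)"
    have wx: "real_of_int (w p) = real m * x p" for p unfolding x_def using mpos by simp
    have vs: "real_of_int (vl M (\<lambda>p. int m * li p) w p) = real m * ext_pt M lam x p" for p
      using li wx unfolding vl_def ext_pt_def by simp
    have "x \<in> ?Q" unfolding Qiff
    proof (intro conjI allI impI)
      fix p assume "p \<notin> P - M"
      then have "w p = 0" using w Ziff by blast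
      then show "x p = 0" unfolding x_def by simp
    next
      fix p q assume "le p q"
      then have "vl M (\<lambda>p. int m * li p) w p \<le> vl M (\<lambda>p. int m * li p) w q" using w Ziff by blast
      then have "real_of_int (vl M (\<lambda>p. int m * li p) w p) \<le> real_of_int (vl M (\<lambda>p. int m * li p) w q)"
        by simp
      then have "real m * ext_pt M lam x p \<le> real m * ext_pt M lam x q" using vs by simp
      then show "ext_pt M lam x p \<le> ext_pt M lam x q" using mpos by simp
    qed
    moreover have "z = (\<lambda>p. real m * x p)" using zw wx by (simp add: fun_eq_iff)
    moreover have "\<forall>p. z p \<in> \<int>" using zw by simp
    ultimately show "z \<in> {z \<in> (\<lambda>x p. real m * x p) ` ?Q. \<forall>p. z p \<in> \<int>}" by blast
  qed
  have inj: "inj_on ?emb ?Z" by (rule inj_onI) (simp add: fun_eq_iff)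
  show ?thesis unfolding ehrhart_count_def E by (rule card_image[OF inj])
qed

lemma ehr_zero:
  "ehrhart_count Q 0 = (if Q = {} then 0 else 1)"
proof -
  have "{z \<in> (\<lambda>x p. real 0 * x p) ` Q. \<forall>p. z p \<in> \<int>} = (if Q = {} then {} else {\<lambda>p. 0})"
    by auto
  then show ?thesis unfolding ehrhart_count_def by simp
qed


lemma Zi_zero:
  assumes fp: "finite_poset P le" and nl: "natural_labeling P le \<omega>"
    and mm: "poset_min P le \<union> poset_max P le \<subseteq> M"
  shows "Zi P le M (\<lambda>p. 0) = {\<lambda>p. 0}"
proof (intro equalityI subsetI)
  fix w assume w: "w \<in> Zi P le M (\<lambda>p. 0)"
  have z: "\<And>p. p \<notin> P - M \<Longrightarrow> w p = 0" and le: "\<And>p q. le p q \<Longrightarrow> vl M (\<lambda>p. 0) w p \<le> vl M (\<lambda>p. 0) w q"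
    using w unfolding Zi_def by auto
  have "w p = 0" for p
  proof (cases "p \<in> P - M")
    case True
    then have pP: "p \<in> P" and pM: "p \<notin> M" by auto
    obtain a where a: "a \<in> M" "le a p" using min_below(1)[OF fp nl mm pP] by blast
    obtain b where b: "b \<in> M" "le p b" using min_below(2)[OF fp nl mm pP] by blast
    have "vl M (\<lambda>p. 0) w a \<le> vl M (\<lambda>p. 0) w p" using le a(2) by blast
    moreover have "vl M (\<lambda>p. 0) w p \<le> vl M (\<lambda>p. 0) w b" using le b(2) by blast
    ultimately show ?thesis using a(1) b(1) pM unfolding vl_def by simp
  next
    case False
    then show ?thesis using z by blast
  qed
  then show "w \<in> {\<lambda>p. 0}" by (simp add: fun_eq_iff)
next
  fix w :: "'a \<Rightarrow> int" assume "w \<in> {\<lambda>p. 0}"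
  then show "w \<in> Zi P le M (\<lambda>p. 0)" unfolding Zi_def vl_def by simp
qed

lemma polyfun_F:
  fixes C :: "'x \<Rightarrow> (nat \<times> nat) set" and c d :: "'x \<Rightarrow> nat \<Rightarrow> nat \<Rightarrow> real"
  shows "polyfun (\<lambda>x. \<Sum>ys\<in>A. \<Prod>(i, j)\<in>C ys. (x * c ys i j - d ys i j + real (j - i - 1)) gchoose (j - i - 1))"
proof (rule polyfun_sum, rule polyfun_prod)
  fix ys :: 'x and b :: "nat \<times> nat"
  obtain i j :: nat where b: "b = (i, j)" by (cases b)
  have "polyfun (\<lambda>x. (x * c ys i j - d ys i j + real (j - i - 1)) gchoose (j - i - 1))"
    by (intro polyfun_gchoose polyfun_add polyfun_diff polyfun_mult polyfun_id polyfun_const)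
  then show "polyfun (\<lambda>x. case b of (i, j) \<Rightarrow> (x * c ys i j - d ys i j + real (j - i - 1)) gchoose (j - i - 1))"
    using b by simp
qed

theorem theorem6p4:
  fixes P :: "'a set" and le :: "'a \<Rightarrow> 'a \<Rightarrow> bool" and M :: "'a set"
    and lam :: "'a \<Rightarrow> real" and \<omega> :: "'a \<Rightarrow> nat" and n :: nat
  assumes "marked_poset P le M lam"
    and "strict_marking le M lam"
    and "irredundant le M lam"
    and "\<forall>a\<in>M. lam a \<in> \<int>"
    and "natural_labeling P le \<omega>"
  shows "real (ehrhart_count (marked_order_polytope P le M lam) n) =
    (\<Sum>ys\<in>marked_linexts P le M lam \<omega>.
       \<Prod>(i, j)\<in>consecutive_marked M ys.
          (real n * (lam (ys ! j) - lam (ys ! i)) - real (descents_between \<omega> ys i j)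
             + real (j - i - 1)) gchoose (j - i - 1))"
proof -
  have fp: "finite_poset P le" and MP: "M \<subseteq> P" and mm: "poset_min P le \<union> poset_max P le \<subseteq> M"
    using assms(1) unfolding marked_poset_def by auto
  have inj: "inj_on \<omega> P" using assms(5) unfolding natural_labeling_def bij_betw_def by blast
  have omono: "\<And>p q. le p q \<Longrightarrow> \<omega> p \<le> \<omega> q" using assms(5) unfolding natural_labeling_def by blast
  define li where "li = (\<lambda>p. \<lfloor>lam p\<rfloor>)"
  have li: "real_of_int (li a) = lam a" if "a \<in> M" for a
    using assms(4) that unfolding li_def by (metis Ints_cases floor_of_int)
  define mu where "mu = (\<lambda>(m::nat) p. int m * li p)"
  define LL where "LL = marked_linexts P le M lam \<omega>"
  define Q where "Q = marked_order_polytope P le M lam"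
  define F where "F = (\<lambda>x::real. \<Sum>ys\<in>LL. \<Prod>(i, j)\<in>consecutive_marked M ys.
          (x * (lam (ys ! j) - lam (ys ! i)) - real (descents_between \<omega> ys i j) + real (j - i - 1)) gchoose (j - i - 1))"
  have rhs: "(\<Sum>ys\<in>marked_linexts P le M lam \<omega>.
       \<Prod>(i, j)\<in>consecutive_marked M ys.
          (real n * (lam (ys ! j) - lam (ys ! i)) - real (descents_between \<omega> ys i j)
             + real (j - i - 1)) gchoose (j - i - 1)) = F (real n)"
    unfolding F_def LL_def by simp
  have polyF: "polyfun F" unfolding F_def by (rule polyfun_F)
  have mu_lt: "mu m a < mu m b \<longleftrightarrow> lam a < lam b" if "m \<ge> 1" "a \<in> M" "b \<in> M" for m a b
  proof -
    have "mu m a < mu m b \<longleftrightarrow> li a < li b" unfolding mu_def using that(1) by simp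
    also have "\<dots> \<longleftrightarrow> real_of_int (li a) < real_of_int (li b)" by simp
    finally show ?thesis using li that by simp
  qed
  have mu_le: "mu m a \<le> mu m b \<longleftrightarrow> lam a \<le> lam b" if "m \<ge> 1" "a \<in> M" "b \<in> M" for m a b
    using mu_lt[OF that(1) that(3) that(2)] by linarith
  have mu_lt0: "mu m a < mu m b \<Longrightarrow> lam a < lam b" if "a \<in> M" "b \<in> M" for m a b
    using mu_lt[OF _ that] unfolding mu_def by (cases "m = 0") auto
  have mu_le0: "lam a \<le> lam b \<Longrightarrow> mu m a \<le> mu m b" if "a \<in> M" "b \<in> M" for m a b
    using mu_le[OF _ that] unfolding mu_def by (cases "m = 0") auto
  have cnt1: "cnt P le M \<omega>"
    by (unfold_locales) (use fp MP mm inj omono in auto)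
  have FZ: "real (card (Zi P le M (mu m))) = F (real m)" if m: "m \<ge> 1" for m
  proof -
    have Lg: "Lg P le M (mu m) \<omega> = LL"
      unfolding LL_def
    proof (rule Lg_eq)
      fix a b assume ab: "a \<in> M" "b \<in> M"
      show "((mu m a, \<omega> a) < (mu m b, \<omega> b)) = (lam a < lam b \<or> lam a = lam b \<and> \<omega> a < \<omega> b)"
        using mu_lt[OF m ab] mu_le[OF m ab] by auto
    qed
    have "real (card (Zi P le M (mu m))) = (\<Sum>ys\<in>LL. \<Prod>(i, j)\<in>consecutive_marked M ys.
       (real_of_int (mu m (ys ! j) - mu m (ys ! i)) - real (gdesc \<omega> ys i j) + real (j - i - 1)) gchoose (j - i - 1))"
      using cnt.count_main[where \<mu>="mu m", OF cnt1] Lg by simp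
    also have "\<dots> = F (real m)"
      unfolding F_def
    proof (rule sum.cong[OF refl], rule prod.cong[OF refl])
      fix ys b assume b: "b \<in> consecutive_marked M ys"
      obtain i j where bij: "b = (i, j)" by (cases b)
      have ij: "ys ! i \<in> M" "ys ! j \<in> M" using b bij unfolding consecutive_marked_def by auto
      have "real_of_int (mu m (ys ! j) - mu m (ys ! i)) = real m * (lam (ys ! j) - lam (ys ! i))"
        unfolding mu_def using li[OF ij(1)] li[OF ij(2)] by (simp add: algebra_simps)
      moreover have "gdesc \<omega> ys i j = descents_between \<omega> ys i j"
        unfolding gdesc_def descents_between_def by simp
      ultimately show "(case b of (i, j) \<Rightarrow> (real_of_int (mu m (ys ! j) - mu m (ys ! i)) - real (gdesc \<omega> ys i j) + real (j - i - 1)) gchoose (j - i - 1))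
          = (case b of (i, j) \<Rightarrow> (real m * (lam (ys ! j) - lam (ys ! i)) - real (descents_between \<omega> ys i j) + real (j - i - 1)) gchoose (j - i - 1))"
        using bij by simp
    qed
    finally show ?thesis .
  qed
  have EZ: "ehrhart_count Q m = card (Zi P le M (mu m))" if "m \<ge> 1" for m
    unfolding Q_def mu_def by (rule ehr_Zi[OF li that])
  show ?thesis
  proof (cases "n \<ge> 1")
    case True
    then show ?thesis using EZ[OF True] FZ[OF True] rhs Q_def by simp
  next
    case False
    then have n0: "n = 0" by simp
    show ?thesis
    proof (cases "Q = {}")
      case True
      have "F (real m) = 0" if "m \<ge> 1" for m
      proof -
        have "ehrhart_count Q m = 0" unfolding ehrhart_count_def True by simp
        then show ?thesis using EZ[OF that] FZ[OF that] by simp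
      qed
      then have "F 0 = (\<lambda>x. 0) 0" by (intro polyfun_eq_at0[OF polyF polyfun_const]) simp
      then show ?thesis using rhs n0 True ehr_zero[of Q] Q_def by simp
    next
      case False
      then obtain x0 where x0: "x0 \<in> Q" by blast
      define \<kappa> where "\<kappa> = (\<lambda>p. (ext_pt M lam x0 p, \<omega> p))"
      have xmono: "\<And>p q. le p q \<Longrightarrow> ext_pt M lam x0 p \<le> ext_pt M lam x0 q"
        using x0 unfolding Q_def marked_order_polytope_def ext_pt_def by blast
      have kinj: "inj_on \<kappa> P" using inj unfolding \<kappa>_def inj_on_def by auto
      have kmono: "\<And>p q. le p q \<Longrightarrow> \<kappa> p \<le> \<kappa> q"
        using xmono omono unfolding \<kappa>_def by (auto simp: less_eq_prod_def)
      have cnt2: "cnt P le M \<kappa>"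
        by (unfold_locales) (use fp MP mm kinj kmono in auto)
      define G where "G = (\<lambda>x::real. \<Sum>ys\<in>LL. \<Prod>(i, j)\<in>consecutive_marked M ys.
          (x * (lam (ys ! j) - lam (ys ! i)) - real (gdesc \<kappa> ys i j) + real (j - i - 1)) gchoose (j - i - 1))"
      have polyG: "polyfun G" unfolding G_def by (rule polyfun_F)
      have GZ: "real (card (Zi P le M (mu m))) = G (real m)" for m
      proof -
        have Lg: "Lg P le M (mu m) \<kappa> = LL"
          unfolding LL_def
        proof (rule Lg_eq)
          fix a b assume ab: "a \<in> M" "b \<in> M"
          have ka: "\<kappa> a = (lam a, \<omega> a)" "\<kappa> b = (lam b, \<omega> b)" using ab unfolding \<kappa>_def ext_pt_def by auto
          show "((mu m a, \<kappa> a) < (mu m b, \<kappa> b)) = (lam a < lam b \<or> lam a = lam b \<and> \<omega> a < \<omega> b)"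
            unfolding ka using mu_lt0[OF ab, of m] mu_le0[OF ab, of m] by auto
        qed
        have "real (card (Zi P le M (mu m))) = (\<Sum>ys\<in>LL. \<Prod>(i, j)\<in>consecutive_marked M ys.
           (real_of_int (mu m (ys ! j) - mu m (ys ! i)) - real (gdesc \<kappa> ys i j) + real (j - i - 1)) gchoose (j - i - 1))"
          using cnt.count_main[where \<mu>="mu m", OF cnt2] Lg by simp
        also have "\<dots> = G (real m)"
          unfolding G_def
        proof (rule sum.cong[OF refl], rule prod.cong[OF refl])
          fix ys b assume b: "b \<in> consecutive_marked M ys"
          obtain i j where bij: "b = (i, j)" by (cases b)
          have ij: "ys ! i \<in> M" "ys ! j \<in> M" using b bij unfolding consecutive_marked_def by auto
          have "real_of_int (mu m (ys ! j) - mu m (ys ! i)) = real m * (lam (ys ! j) - lam (ys ! i))"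
            unfolding mu_def using li[OF ij(1)] li[OF ij(2)] by (simp add: algebra_simps)
          then show "(case b of (i, j) \<Rightarrow> (real_of_int (mu m (ys ! j) - mu m (ys ! i)) - real (gdesc \<kappa> ys i j) + real (j - i - 1)) gchoose (j - i - 1))
              = (case b of (i, j) \<Rightarrow> (real m * (lam (ys ! j) - lam (ys ! i)) - real (gdesc \<kappa> ys i j) + real (j - i - 1)) gchoose (j - i - 1))"
            using bij by simp
        qed
        finally show ?thesis .
      qed
      have "F 0 = G 0"
        by (rule polyfun_eq_at0[OF polyF polyG]) (use FZ GZ in simp)
      moreover have "G 0 = 1"
      proof -
        have "mu 0 = (\<lambda>p. 0)" unfolding mu_def by (simp add: fun_eq_iff)
        then have "Zi P le M (mu 0) = {\<lambda>p. 0}" using Zi_zero[OF fp assms(5) mm] by simp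
        then show ?thesis using GZ[of 0] by simp
      qed
      ultimately show ?thesis using rhs n0 False ehr_zero[of Q] Q_def by simp
    qed
  qed
qed


end
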